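(* Let $f : \{0, 1\}^n \to \{0, 1\}$ be a symmetric Boolean function. Then $\mathsf{NAADT}(f) = O(\mathsf{D}_{\mathrm{cc}}(f \circ \mathsf{AND})^2)$.
   Context: $f$ is symmetric if $f(x)$ depends only on the Hamming weight of $x$. For $S\subseteq[n]$, $\mathsf{AND}_S(x)=\prod_{i\in S}x_i$. $\mathsf{NAADT}(f)$ (non-adaptive AND decision tree complexity) is the minimum $k$ for which there exist $S_1,\dots,S_k\subseteq[n]$ such that $f(x)$ is determined by the values $\mathsf{AND}_{S_1}(x),\dots,\mathsf{AND}_{S_k}(x)$ for all $x\in\{0,1\}^n$. $f\circ\mathsf{AND}$ is the two-party function $(x,y)\mapsto f(x_1\wedge y_1,\dots,x_n\wedge y_n)$ with Alice holding $x$, Bob holding $y$, and $\mathsf{D}_{\mathrm{cc}}$ is deterministic (two-way) communication complexity. *)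

theory Defs
  imports Complex_Main
begin

text \<open>Inputs in {0,1}^n are bool lists of length n (True = 1).\<close>

definition symmetric_fn :: "nat \<Rightarrow> (bool list \<Rightarrow> bool) \<Rightarrow> bool" where
  "symmetric_fn n f \<longleftrightarrow> (\<forall>x y. length x = n \<longrightarrow> length y = n \<longrightarrow>
      count_list x True = count_list y True \<longrightarrow> f x = f y)"

definition AND_S :: "nat set \<Rightarrow> bool list \<Rightarrow> bool" where
  "AND_S S x \<longleftrightarrow> (\<forall>i\<in>S. x ! i)"

definition NAADT :: "nat \<Rightarrow> (bool list \<Rightarrow> bool) \<Rightarrow> nat" where
  "NAADT n f = (LEAST k. \<exists>Ss :: nat set list. length Ss = k \<and> (\<forall>S\<in>set Ss. S \<subseteq> {..<n}) \<and>
      (\<forall>x y. length x = n \<longrightarrow> length y = n \<longrightarrow>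
         map (\<lambda>S. AND_S S x) Ss = map (\<lambda>S. AND_S S y) Ss \<longrightarrow> f x = f y))"

datatype ('a, 'b) protocol =
    Leaf bool
  | AliceNode "'a \<Rightarrow> bool" "('a, 'b) protocol" "('a, 'b) protocol"
  | BobNode "'b \<Rightarrow> bool" "('a, 'b) protocol" "('a, 'b) protocol"

fun run_protocol :: "('a, 'b) protocol \<Rightarrow> 'a \<Rightarrow> 'b \<Rightarrow> bool" where
  "run_protocol (Leaf v) x y = v"
| "run_protocol (AliceNode g P0 P1) x y = run_protocol (if g x then P1 else P0) x y"
| "run_protocol (BobNode g P0 P1) x y = run_protocol (if g y then P1 else P0) x y"

fun protocol_depth :: "('a, 'b) protocol \<Rightarrow> nat" where
  "protocol_depth (Leaf v) = 0"
| "protocol_depth (AliceNode g P0 P1) = Suc (max (protocol_depth P0) (protocol_depth P1))"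
| "protocol_depth (BobNode g P0 P1) = Suc (max (protocol_depth P0) (protocol_depth P1))"

definition Dcc :: "'a set \<Rightarrow> 'b set \<Rightarrow> ('a \<Rightarrow> 'b \<Rightarrow> bool) \<Rightarrow> nat" where
  "Dcc A B F = (LEAST d. \<exists>P :: ('a, 'b) protocol. protocol_depth P = d \<and>
      (\<forall>x\<in>A. \<forall>y\<in>B. run_protocol P x y = F x y))"

definition compose_AND :: "(bool list \<Rightarrow> bool) \<Rightarrow> bool list \<Rightarrow> bool list \<Rightarrow> bool" where
  "compose_AND f x y = f (map2 (\<and>) x y)"

definition Dcc_AND :: "nat \<Rightarrow> (bool list \<Rightarrow> bool) \<Rightarrow> nat" where
  "Dcc_AND n f = Dcc {x. length x = n} {y. length y = n} (compose_AND f)"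

end

theory Submission
  imports Defs "HOL-Computational_Algebra.Polynomial" "HOL-Library.FuncSet"
begin


fun fdiff :: "nat \<Rightarrow> (nat \<Rightarrow> real) \<Rightarrow> nat \<Rightarrow> real" where
  "fdiff 0 G s = G s"
| "fdiff (Suc k) G s = fdiff k G (Suc s) - fdiff k G s"

lemma fdiff_const_step:
  assumes "k \<ge> 1" "\<And>j. s \<le> j \<Longrightarrow> j < s + k \<Longrightarrow> G j = c"
  shows "fdiff k G s = G (s + k) - c"
  using assms
proof (induction k arbitrary: s)
  case 0 then show ?case by simp
next
  case (Suc k)
  show ?case
  proof (cases "k = 0")
    case True
    then show ?thesis using Suc.prems by simp
  next
    case False
    have a: "fdiff k G (Suc s) = G (Suc s + k) - c"
      using Suc.IH[of "Suc s"] Suc.prems False by auto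
    have b: "fdiff k G s = G (s + k) - c"
      using Suc.IH[of s] Suc.prems False by auto
    have "G (s + k) = c" using Suc.prems False by auto
    then show ?thesis using a b by simp
  qed
qed

lemma newton:
  "G (s + j) = (\<Sum>k\<le>j. of_nat (j choose k) * fdiff k G s)"
proof (induction j arbitrary: s)
  case 0 then show ?case by simp
next
  case (Suc j)
  have "G (s + Suc j) = G (Suc s + j)" by simp
  also have "\<dots> = (\<Sum>k\<le>j. of_nat (j choose k) * fdiff k G (Suc s))" by (rule Suc.IH)
  also have "\<dots> = (\<Sum>k\<le>j. of_nat (j choose k) * fdiff (Suc k) G s)
       + (\<Sum>k\<le>j. of_nat (j choose k) * fdiff k G s)"
  proof -
    have eq: "\<And>k. fdiff k G (Suc s) = fdiff (Suc k) G s + fdiff k G s" by simp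
    show ?thesis by (simp only: eq distrib_left sum.distrib)
  qed
  also have "(\<Sum>k\<le>j. of_nat (j choose k) * fdiff k G s)
      = fdiff 0 G s + (\<Sum>k\<le>j. of_nat (j choose Suc k) * fdiff (Suc k) G s)"
  proof -
    have "(\<Sum>k\<le>Suc j. of_nat (j choose k) * fdiff k G s)
        = fdiff 0 G s + (\<Sum>k\<le>j. of_nat (j choose Suc k) * fdiff (Suc k) G s)"
      by (subst sum.atMost_Suc_shift) simp
    moreover have "(\<Sum>k\<le>Suc j. of_nat (j choose k) * fdiff k G s)
        = (\<Sum>k\<le>j. of_nat (j choose k) * fdiff k G s)"
      by simp
    ultimately show ?thesis by simp
  qed
  also have "(\<Sum>k\<le>j. of_nat (j choose k) * fdiff (Suc k) G s) +
      (fdiff 0 G s + (\<Sum>k\<le>j. of_nat (j choose Suc k) * fdiff (Suc k) G s))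
     = fdiff 0 G s + (\<Sum>k\<le>j. of_nat (Suc j choose Suc k) * fdiff (Suc k) G s)"
    by (simp add: sum.distrib[symmetric] algebra_simps del: fdiff.simps)
  also have "\<dots> = (\<Sum>k\<le>Suc j. of_nat (Suc j choose k) * fdiff k G s)"
    by (subst sum.atMost_Suc_shift) simp
  finally show ?case .
qed

definition bpoly :: "nat \<Rightarrow> real poly" where
  "bpoly k = smult (1 / fact k) (\<Prod>i<k. [:- of_nat i, 1:])"

lemma bpoly_eval: "poly (bpoly k) (of_nat j) = of_nat (j choose k)"
proof -
  have "poly (bpoly k) (of_nat j) = (\<Prod>i<k. of_nat j - of_nat i) / fact k"
    by (simp add: bpoly_def poly_prod)
  also have "\<dots> = (of_nat j :: real) gchoose k"
    by (simp add: gbinomial_prod_rev atLeast0LessThan)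
  also have "\<dots> = of_nat (j choose k)" by (simp add: binomial_gbinomial)
  finally show ?thesis .
qed

lemma bpoly_degree: "degree (bpoly k) \<le> k"
proof -
  have "degree (\<Prod>i<k. [:- of_nat i, 1::real:]) \<le> (\<Sum>i<k. degree [:- of_nat i, 1::real:])"
    using degree_prod_sum_le[of "{..<k}" "\<lambda>i. [:- of_nat i, 1::real:]"] by (simp add: o_def)
  also have "\<dots> = k" by simp
  finally show ?thesis unfolding bpoly_def using degree_smult_le order_trans by blast
qed

lemma poly_window:
  fixes G :: "nat \<Rightarrow> real"
  assumes bin: "\<And>j. j \<le> L \<Longrightarrow> G (s+j) = 0 \<or> G (s+j) = 1"
    and neq: "G s \<noteq> G (Suc s)" and L1: "1 \<le> L" and KL: "2*K \<le> L + 2"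
  shows "\<exists>k. K \<le> k \<and> k \<le> L \<and> fdiff k G s \<noteq> 0"
proof (rule ccontr)
  assume "\<not> ?thesis"
  hence z: "\<And>k. K \<le> k \<Longrightarrow> k \<le> L \<Longrightarrow> fdiff k G s = 0" by auto
  define P where "P = (\<Sum>k<K. smult (fdiff k G s) (bpoly k))"
  have evalP: "poly P (of_nat j) = G (s + j)" if j: "j \<le> L" for j
  proof -
    have "poly P (of_nat j) = (\<Sum>k<K. of_nat (j choose k) * fdiff k G s)"
      by (simp add: P_def poly_sum bpoly_eval mult.commute)
    also have "\<dots> = (\<Sum>k \<in> {..<K} \<inter> {..j}. of_nat (j choose k) * fdiff k G s)"
      by (rule sum.mono_neutral_right) auto
    also have "\<dots> = (\<Sum>k\<le>j. of_nat (j choose k) * fdiff k G s)"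
      by (rule sum.mono_neutral_left) (use j z in \<open>force+\<close>)
    also have "\<dots> = G (s+j)" by (rule newton[symmetric])
    finally show ?thesis .
  qed
  have degP: "degree P \<le> K - 1"
    unfolding P_def
  proof (rule degree_sum_le)
    fix k assume "k \<in> {..<K}"
    then have "k \<le> K - 1" by auto
    then show "degree (smult (fdiff k G s) (bpoly k)) \<le> K - 1"
      using degree_smult_le[of "fdiff k G s" "bpoly k"] bpoly_degree[of k] by linarith
  qed simp
  define Q where "Q = P * (P - 1)"
  have roots: "of_nat ` {0..L} \<subseteq> {x. poly Q x = 0}"
  proof
    fix x assume "x \<in> (of_nat ` {0..L} :: real set)"
    then obtain j where j: "j \<le> L" "x = of_nat j" by auto
    then show "x \<in> {x. poly Q x = 0}" using evalP[OF j(1)] bin[OF j(1)] by (auto simp: Q_def)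
  qed
  have "P = 0 \<or> P = 1"
  proof (rule ccontr)
    assume "\<not> (P = 0 \<or> P = 1)"
    hence Q0: "Q \<noteq> 0" by (simp add: Q_def)
    have "degree Q \<le> degree P + degree (P - 1)" unfolding Q_def by (rule degree_mult_le)
    moreover have "degree (P - 1) \<le> degree P" using degree_diff_le_max[of P 1] by simp
    ultimately have dQ: "degree Q \<le> L" using degP KL by linarith
    have c1: "card (of_nat ` {0..L} :: real set) = L + 1"
      by (subst card_image) (auto simp: inj_on_def)
    have c2: "card (of_nat ` {0..L} :: real set) \<le> card {x. poly Q x = 0}"
      by (rule card_mono[OF poly_roots_finite[OF Q0] roots])
    have c3: "card {x. poly Q x = 0} \<le> degree Q" by (rule card_poly_roots_bound[OF Q0])
    show False using dQ c1 c2 c3 by simp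
  qed
  then have "poly P (of_nat 0) = poly P (of_nat 1)" by auto
  then show False using evalP[of 0] evalP[of 1] L1 neq by simp
qed



lemma sum_Pow_insert:
  fixes h :: "'a set \<Rightarrow> real"
  assumes "finite S" "e \<notin> S"
  shows "(\<Sum>X\<in>Pow (insert e S). h X) = (\<Sum>X\<in>Pow S. h X) + (\<Sum>X\<in>Pow S. h (insert e X))"
proof -
  have inj: "inj_on (insert e) (Pow S)"
    using assms(2) by (auto simp: inj_on_def)
  have "(\<Sum>X\<in>Pow (insert e S). h X) = (\<Sum>X\<in>Pow S \<union> insert e ` Pow S. h X)"
    by (simp add: Pow_insert)
  also have "\<dots> = (\<Sum>X\<in>Pow S. h X) + (\<Sum>X\<in>insert e ` Pow S. h X)"
    by (rule sum.union_disjoint) (use assms in auto)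
  also have "(\<Sum>X\<in>insert e ` Pow S. h X) = (\<Sum>X\<in>Pow S. h (insert e X))"
    by (rule sum.reindex[OF inj, unfolded o_def])
  finally show ?thesis .
qed

lemma mob1:
  assumes "finite S"
  shows "(\<Sum>X\<in>Pow S. (-1::real)^(card S - card X) * G (s + card X)) = fdiff (card S) G s"
  using assms
proof (induction S arbitrary: s rule: finite_induct)
  case empty then show ?case by simp
next
  case (insert e S)
  have A: "(\<Sum>X\<in>Pow S. (-1::real)^(card (insert e S) - card X) * G (s + card X))
      = - fdiff (card S) G s"
  proof -
    have "(\<Sum>X\<in>Pow S. (-1::real)^(card (insert e S) - card X) * G (s + card X))
        = (\<Sum>X\<in>Pow S. - ((-1::real)^(card S - card X) * G (s + card X)))"
    proof (rule sum.cong)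
      fix X assume "X \<in> Pow S"
      then have "card X \<le> card S" using insert(1) by (simp add: card_mono)
      then have "card (insert e S) - card X = Suc (card S - card X)" using insert by simp
      then show "(-1::real)^(card (insert e S) - card X) * G (s + card X) = - ((-1::real)^(card S - card X) * G (s + card X))"
        by simp
    qed simp
    also have "\<dots> = - fdiff (card S) G s" using insert.IH[of s] by (simp add: sum_negf)
    finally show ?thesis .
  qed
  have B: "(\<Sum>X\<in>Pow S. (-1::real)^(card (insert e S) - card (insert e X)) * G (s + card (insert e X)))
      = fdiff (card S) G (Suc s)"
  proof -
    have "(\<Sum>X\<in>Pow S. (-1::real)^(card (insert e S) - card (insert e X)) * G (s + card (insert e X)))
        = (\<Sum>X\<in>Pow S. (-1::real)^(card S - card X) * G (Suc s + card X))"
    proof (rule sum.cong)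
      fix X assume X: "X \<in> Pow S"
      then have "finite X" "e \<notin> X" using insert finite_subset by auto
      then show "(-1::real)^(card (insert e S) - card (insert e X)) * G (s + card (insert e X)) = (-1::real)^(card S - card X) * G (Suc s + card X)"
        using insert by simp
    qed simp
    also have "\<dots> = fdiff (card S) G (Suc s)" using insert.IH[of "Suc s"] by simp
    finally show ?thesis .
  qed
  show ?case
    using sum_Pow_insert[OF insert(1,2), of "\<lambda>X. (-1::real)^(card (insert e S) - card X) * G (s + card X)"] A B insert
    by simp
qed

lemma mob2:
  fixes H :: "'a set \<Rightarrow> real"
  assumes "finite S" "e \<in> S" "e \<notin> T"
  shows "(\<Sum>X\<in>Pow S. (-1::real)^(card S - card X) * H (X \<inter> T)) = 0"
proof -
  define S0 where "S0 = S - {e}"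
  have S: "S = insert e S0" "e \<notin> S0" "finite S0" using assms by (auto simp: S0_def)
  have cS: "card S = Suc (card S0)" using S by simp
  have "(\<Sum>X\<in>Pow S. (-1::real)^(card S - card X) * H (X \<inter> T))
      = (\<Sum>X\<in>Pow S0. (-1::real)^(card S - card X) * H (X \<inter> T))
      + (\<Sum>X\<in>Pow S0. (-1::real)^(card S - card (insert e X)) * H (insert e X \<inter> T))"
    using sum_Pow_insert[OF S(3,2)] S(1) by simp
  also have "\<dots> = (\<Sum>X\<in>Pow S0. (-1::real)^(card S - card X) * H (X \<inter> T)
      + (-1::real)^(card S - card (insert e X)) * H (insert e X \<inter> T))"
    by (simp add: sum.distrib)
  also have "\<dots> = (\<Sum>X\<in>Pow S0. 0)"
  proof (rule sum.cong)
    fix X assume X: "X \<in> Pow S0"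
    then have fX: "finite X" "e \<notin> X" "card X \<le> card S0" using S finite_subset card_mono by auto
    have i: "insert e X \<inter> T = X \<inter> T" using assms(3) by auto
    have c1: "card S - card X = Suc (card S0 - card X)" using cS fX by simp
    have c2: "card S - card (insert e X) = card S0 - card X" using cS fX by simp
    show "(-1::real)^(card S - card X) * H (X \<inter> T)
      + (-1::real)^(card S - card (insert e X)) * H (insert e X \<inter> T) = 0"
      unfolding i c1 c2 by simp
  qed simp
  finally show ?thesis by simp
qed

lemma lal:
  fixes u v :: "nat \<Rightarrow> 'a \<Rightarrow> real"
  assumes "finite I"
    and "\<forall>i\<in>I. \<forall>j\<in>I. (\<Sum>l<r. u l i * v l j) = (if i = j then 1 else 0)"
  shows "card I \<le> r"
  using assms
proof (induction r arbitrary: I u)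
  case 0
  show ?case
  proof (cases "I = {}")
    case False
    then obtain i where "i \<in> I" by auto
    then show ?thesis using "0.prems"(2) by force
  qed simp
next
  case (Suc r)
  show ?case
  proof (cases "\<forall>i\<in>I. u r i = 0")
    case True
    have "\<forall>i\<in>I. \<forall>j\<in>I. (\<Sum>l<r. u l i * v l j) = (if i = j then 1 else 0)"
      using Suc.prems(2) True by simp
    then have "card I \<le> r" using Suc.IH[OF Suc.prems(1)] by blast
    then show ?thesis by simp
  next
    case False
    then obtain i0 where i0: "i0 \<in> I" "u r i0 \<noteq> 0" by auto
    define u' where "u' l i = u l i - (u r i / u r i0) * u l i0" for l i
    have "\<forall>i\<in>I - {i0}. \<forall>j\<in>I - {i0}. (\<Sum>l<r. u' l i * v l j) = (if i = j then 1 else 0)"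
    proof (intro ballI)
      fix i j assume i: "i \<in> I - {i0}" and j: "j \<in> I - {i0}"
      have ur: "u' r i = 0" using i0 by (simp add: u'_def)
      have "(\<Sum>l<r. u' l i * v l j) = (\<Sum>l<Suc r. u' l i * v l j)" using ur by simp
      also have "\<dots> = (\<Sum>l<Suc r. u l i * v l j) - (u r i / u r i0) * (\<Sum>l<Suc r. u l i0 * v l j)"
        by (simp add: u'_def algebra_simps sum_subtractf sum_distrib_left del: sum.lessThan_Suc)
      also have "\<dots> = (if i = j then 1 else 0)"
        using Suc.prems(2) i j i0 by auto
      finally show "(\<Sum>l<r. u' l i * v l j) = (if i = j then 1 else 0)" .
    qed
    then have "card (I - {i0}) \<le> r" using Suc.IH[of "I - {i0}" u'] Suc.prems(1) by blast
    then show ?thesis using i0 Suc.prems(1) by (simp add: card_Diff_singleton)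
  qed
qed



lemma count_True_card: "count_list xs True = card {i. i < length xs \<and> xs ! i}"
  by (simp add: count_list_eq_length_filter length_filter_conv_card)

lemma window:
  fixes \<alpha> \<beta> :: "nat \<Rightarrow> bool list \<Rightarrow> real" and G :: "nat \<Rightarrow> real"
  assumes dec: "\<And>x y. length x = n \<Longrightarrow> length y = n \<Longrightarrow>
      G (count_list (map2 (\<and>) x y) True) = (\<Sum>l<r. \<alpha> l x * \<beta> l y)"
    and sk: "s + k \<le> n" and nz: "fdiff k G s \<noteq> 0"
  shows "(n - s) choose k \<le> r"
proof -
  define vec where "vec S = map (\<lambda>i. i < s \<or> i \<in> S) [0..<n]" for S :: "nat set"
  have len: "length (vec S) = n" for S by (simp add: vec_def)
  have m2: "map2 (\<and>) (vec X) (vec T) = vec (X \<inter> T)" for X T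
    by (auto intro!: nth_equalityI simp: vec_def)
  have cnt: "count_list (vec Y) True = s + card Y" if Y: "Y \<subseteq> {s..<n}" for Y
  proof -
    have "{i. i < length (vec Y) \<and> vec Y ! i} = {..<s} \<union> Y"
      using Y sk by (auto simp: vec_def)
    moreover have "card ({..<s} \<union> Y) = s + card Y"
      using Y by (subst card_Un_disjoint) (auto intro: finite_subset)
    ultimately show ?thesis by (simp add: count_True_card)
  qed
  have key: "G (s + card (X \<inter> T)) = (\<Sum>l<r. \<alpha> l (vec X) * \<beta> l (vec T))"
    if "X \<subseteq> {s..<n}" "T \<subseteq> {s..<n}" for X T
  proof -
    have "G (s + card (X \<inter> T)) = G (count_list (map2 (\<and>) (vec X) (vec T)) True)"
      using that by (simp add: m2 cnt le_infI1)
    also have "\<dots> = (\<Sum>l<r. \<alpha> l (vec X) * \<beta> l (vec T))" by (rule dec) (simp_all add: len)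
    finally show ?thesis .
  qed
  define I where "I = {S. S \<subseteq> {s..<n} \<and> card S = k}"
  define \<delta> where "\<delta> = fdiff k G s"
  define u where "u l S = (\<Sum>X\<in>Pow S. (-1::real)^(k - card X) * \<alpha> l (vec X)) / \<delta>" for l S
  define v where "v l T = \<beta> l (vec T)" for l T
  have fin: "finite I" unfolding I_def by (rule finite_subset[of _ "Pow {s..<n}"]) auto
  have "\<forall>S\<in>I. \<forall>T\<in>I. (\<Sum>l<r. u l S * v l T) = (if S = T then 1 else 0)"
  proof (intro ballI)
    fix S T assume S: "S \<in> I" and T: "T \<in> I"
    have fS: "finite S" using S unfolding I_def by (auto intro: finite_subset)
    have "(\<Sum>l<r. u l S * v l T) = (\<Sum>l<r. \<Sum>X\<in>Pow S. (-1::real)^(k - card X) * (\<alpha> l (vec X) * \<beta> l (vec T))) / \<delta>"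
    proof -
      have "u l S * v l T = (\<Sum>X\<in>Pow S. (-1::real)^(k - card X) * (\<alpha> l (vec X) * \<beta> l (vec T))) / \<delta>" for l
        unfolding u_def v_def by (simp add: sum_distrib_right mult.assoc)
      then show ?thesis by (simp add: sum_divide_distrib)
    qed
    also have "\<dots> = (\<Sum>X\<in>Pow S. (-1::real)^(k - card X) * (\<Sum>l<r. \<alpha> l (vec X) * \<beta> l (vec T))) / \<delta>"
      by (subst sum.swap) (simp add: sum_distrib_left)
    also have "\<dots> = (\<Sum>X\<in>Pow S. (-1::real)^(card S - card X) * G (s + card (X \<inter> T))) / \<delta>"
    proof -
      have "(\<Sum>X\<in>Pow S. (-1::real)^(k - card X) * (\<Sum>l<r. \<alpha> l (vec X) * \<beta> l (vec T)))
          = (\<Sum>X\<in>Pow S. (-1::real)^(card S - card X) * G (s + card (X \<inter> T)))"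
      proof (rule sum.cong)
        fix X assume "X \<in> Pow S"
        then show "(-1::real)^(k - card X) * (\<Sum>l<r. \<alpha> l (vec X) * \<beta> l (vec T))
            = (-1::real)^(card S - card X) * G (s + card (X \<inter> T))"
          using S T key[of X T] unfolding I_def by auto
      qed simp
      then show ?thesis by simp
    qed
    also have "\<dots> = (if S = T then 1 else 0)"
    proof (cases "S = T")
      case True
      have "(\<Sum>X\<in>Pow S. (-1::real)^(card S - card X) * G (s + card (X \<inter> T)))
          = (\<Sum>X\<in>Pow S. (-1::real)^(card S - card X) * G (s + card X))"
        by (rule sum.cong) (auto simp: True Int_absorb2)
      also have "\<dots> = \<delta>" using mob1[OF fS, of G s] S by (simp add: I_def \<delta>_def)
      finally show ?thesis using True nz by (simp add: \<delta>_def)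
    next
      case False
      have "\<exists>e. e \<in> S \<and> e \<notin> T"
      proof (rule ccontr)
        assume "\<not> ?thesis"
        then have "S \<subseteq> T" by auto
        moreover have "finite T" "card S = card T" using S T unfolding I_def by (auto intro: finite_subset)
        ultimately have "S = T" using card_subset_eq by blast
        then show False using False by simp
      qed
      then obtain e where "e \<in> S" "e \<notin> T" by auto
      then have "(\<Sum>X\<in>Pow S. (-1::real)^(card S - card X) * (\<lambda>Y. G (s + card Y)) (X \<inter> T)) = 0"
        by (intro mob2[OF fS])
      then show ?thesis using False by simp
    qed
    finally show "(\<Sum>l<r. u l S * v l T) = (if S = T then 1 else 0)" .
  qed
  then have "card I \<le> r" by (rule lal[OF fin])
  moreover have "card I = (n - s) choose k"
    unfolding I_def by (subst n_subsets) auto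
  ultimately show ?thesis by simp
qed



fun rects :: "('a, 'b) protocol \<Rightarrow> (('a \<Rightarrow> real) \<times> ('b \<Rightarrow> real)) list" where
  "rects (Leaf v) = (if v then [(\<lambda>_. 1, \<lambda>_. 1)] else [])"
| "rects (AliceNode g P0 P1) =
     map (\<lambda>p. (\<lambda>x. (if g x then 0 else 1) * fst p x, snd p)) (rects P0) @
     map (\<lambda>p. (\<lambda>x. (if g x then 1 else 0) * fst p x, snd p)) (rects P1)"
| "rects (BobNode g P0 P1) =
     map (\<lambda>p. (fst p, \<lambda>y. (if g y then 0 else 1) * snd p y)) (rects P0) @
     map (\<lambda>p. (fst p, \<lambda>y. (if g y then 1 else 0) * snd p y)) (rects P1)"

lemma rects_run: "(if run_protocol P x y then 1 else 0 :: real) = (\<Sum>p\<leftarrow>rects P. fst p x * snd p y)"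
proof (induction P)
  case (Leaf v) then show ?case by simp
next
  case (AliceNode g P0 P1)
  have e0: "(\<Sum>p\<leftarrow>rects P0. (if g x then 0 else 1) * fst p x * snd p y) = (if g x then 0 else 1) * (\<Sum>p\<leftarrow>rects P0. fst p x * snd p y)"
    by (simp add: sum_list_const_mult mult.assoc)
  have e1: "(\<Sum>p\<leftarrow>rects P1. (if g x then 1 else 0) * fst p x * snd p y) = (if g x then 1 else 0) * (\<Sum>p\<leftarrow>rects P1. fst p x * snd p y)"
    by (simp add: sum_list_const_mult mult.assoc)
  show ?case using AliceNode.IH[symmetric] e0 e1 by (simp add: o_def)
next
  case (BobNode g P0 P1)
  have e0: "(\<Sum>p\<leftarrow>rects P0. fst p x * ((if g y then 0 else 1) * snd p y)) = (if g y then 0 else 1) * (\<Sum>p\<leftarrow>rects P0. fst p x * snd p y)"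
    by (simp add: sum_list_const_mult algebra_simps)
  have e1: "(\<Sum>p\<leftarrow>rects P1. fst p x * ((if g y then 1 else 0) * snd p y)) = (if g y then 1 else 0) * (\<Sum>p\<leftarrow>rects P1. fst p x * snd p y)"
    by (simp add: sum_list_const_mult algebra_simps)
  show ?case using BobNode.IH[symmetric] e0 e1 by (simp add: o_def)
qed

lemma rects_len: "length (rects P) \<le> 2 ^ protocol_depth P"
proof (induction P)
  case (AliceNode g P0 P1)
  have "2 ^ protocol_depth P0 \<le> (2::nat) ^ max (protocol_depth P0) (protocol_depth P1)"
       "2 ^ protocol_depth P1 \<le> (2::nat) ^ max (protocol_depth P0) (protocol_depth P1)"
    by (auto intro: power_increasing)
  then show ?case using AliceNode.IH by (simp only: rects.simps protocol_depth.simps length_append length_map power_Suc)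
next
  case (BobNode g P0 P1)
  have "2 ^ protocol_depth P0 \<le> (2::nat) ^ max (protocol_depth P0) (protocol_depth P1)"
       "2 ^ protocol_depth P1 \<le> (2::nat) ^ max (protocol_depth P0) (protocol_depth P1)"
    by (auto intro: power_increasing)
  then show ?case using BobNode.IH by (simp only: rects.simps protocol_depth.simps length_append length_map power_Suc)
qed simp

lemma sum_list_map_nth: "(\<Sum>p\<leftarrow>xs. h p) = (\<Sum>l<length xs. h (xs ! l))"
  by (simp add: sum_list_sum_nth atLeast0LessThan)

fun aprot :: "nat \<Rightarrow> (bool list \<Rightarrow> (bool list, 'b) protocol) \<Rightarrow> (bool list, 'b) protocol" where
  "aprot 0 c = c []"
| "aprot (Suc k) c = AliceNode (\<lambda>x. x ! k) (aprot k (\<lambda>bs. c (bs @ [False]))) (aprot k (\<lambda>bs. c (bs @ [True])))"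

fun bprot :: "nat \<Rightarrow> (bool list \<Rightarrow> ('a, bool list) protocol) \<Rightarrow> ('a, bool list) protocol" where
  "bprot 0 c = c []"
| "bprot (Suc k) c = BobNode (\<lambda>y. y ! k) (bprot k (\<lambda>bs. c (bs @ [False]))) (bprot k (\<lambda>bs. c (bs @ [True])))"

lemma aprot_run: "k \<le> length x \<Longrightarrow> run_protocol (aprot k c) x y = run_protocol (c (take k x)) x y"
proof (induction k arbitrary: c)
  case (Suc k)
  have "run_protocol (aprot (Suc k) c) x y = run_protocol (aprot k (\<lambda>bs. c (bs @ [x ! k]))) x y"
    by (cases "x ! k") simp_all
  also have "\<dots> = run_protocol (c (take k x @ [x ! k])) x y" using Suc by simp
  also have "take k x @ [x ! k] = take (Suc k) x" using Suc.prems by (simp add: take_Suc_conv_app_nth)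
  finally show ?case .
qed simp

lemma bprot_run: "k \<le> length y \<Longrightarrow> run_protocol (bprot k c) x y = run_protocol (c (take k y)) x y"
proof (induction k arbitrary: c)
  case (Suc k)
  have "run_protocol (bprot (Suc k) c) x y = run_protocol (bprot k (\<lambda>bs. c (bs @ [y ! k]))) x y"
    by (cases "y ! k") simp_all
  also have "\<dots> = run_protocol (c (take k y @ [y ! k])) x y" using Suc by simp
  also have "take k y @ [y ! k] = take (Suc k) y" using Suc.prems by (simp add: take_Suc_conv_app_nth)
  finally show ?case .
qed simp

lemma Dcc_AND_witness:
  "\<exists>P. protocol_depth P = Dcc_AND n f \<and>
     (\<forall>x y. length x = n \<longrightarrow> length y = n \<longrightarrow> run_protocol P x y = compose_AND f x y)"
proof -
  define F where "F = compose_AND f"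
  define P0 where "P0 = aprot n (\<lambda>xs. bprot n (\<lambda>ys. Leaf (F xs ys)))"
  have "run_protocol P0 x y = F x y" if "length x = n" "length y = n" for x y
    using that by (simp add: P0_def aprot_run bprot_run)
  then have ex: "\<exists>d. \<exists>P :: (bool list, bool list) protocol. protocol_depth P = d \<and>
      (\<forall>x\<in>{x. length x = n}. \<forall>y\<in>{y. length y = n}. run_protocol P x y = F x y)"
    by auto
  from LeastI_ex[OF ex] show ?thesis
    unfolding Dcc_AND_def Dcc_def F_def by auto
qed



definition disj :: "nat \<Rightarrow> nat \<Rightarrow> nat set list \<Rightarrow> bool" where
  "disj n d Ss \<longleftrightarrow> (\<forall>S\<in>set Ss. S \<subseteq> {..<n}) \<and>
     (\<forall>i<n. \<forall>T. T \<subseteq> {..<n} \<longrightarrow> i \<notin> T \<longrightarrow> card T \<le> d \<longrightarrow> (\<exists>S\<in>set Ss. i \<in> S \<and> S \<inter> T = {}))"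

lemma count_plus_zeros:
  assumes "length x = n"
  shows "count_list x True + card {i. i < n \<and> \<not> x ! i} = n"
proof -
  have "{i. i < n \<and> x ! i} \<union> {i. i < n \<and> \<not> x ! i} = {..<n}" by auto
  moreover have "card ({i. i < n \<and> x ! i} \<union> {i. i < n \<and> \<not> x ! i}) =
      card {i. i < n \<and> x ! i} + card {i. i < n \<and> \<not> x ! i}"
    by (rule card_Un_disjoint) auto
  ultimately show ?thesis using assms by (simp add: count_True_card)
qed

lemma disj_determines:
  assumes hf: "\<And>x. length x = n \<Longrightarrow> f x = g (count_list x True)"
    and gc: "\<And>w. w + d + 1 \<le> n \<Longrightarrow> g w = c"
    and D: "disj n d Ss"
    and x: "length x = n" and y: "length y = n"
    and eq: "map (\<lambda>S. AND_S S x) Ss = map (\<lambda>S. AND_S S y) Ss"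
  shows "f x = f y"
proof -
  define Z where "Z z = {i. i < n \<and> \<not> z ! i}" for z :: "bool list"
  define Dec where "Dec z = {i. i < n \<and> (\<forall>S\<in>set Ss. i \<in> S \<longrightarrow> \<not> AND_S S z)}" for z
  have sub: "\<forall>S\<in>set Ss. S \<subseteq> {..<n}" and dj: "\<And>i T. i < n \<Longrightarrow> T \<subseteq> {..<n} \<Longrightarrow> i \<notin> T \<Longrightarrow> card T \<le> d \<Longrightarrow> (\<exists>S\<in>set Ss. i \<in> S \<and> S \<inter> T = {})"
    using D unfolding disj_def by auto
  have DD: "Dec x = Dec y" using eq unfolding Dec_def map_eq_conv by auto
  have ZD: "Z z \<subseteq> Dec z" for z unfolding Z_def Dec_def AND_S_def by auto
  have DZ: "Dec z \<subseteq> Z z" if cz: "card (Z z) \<le> d" for z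
  proof
    fix i assume i: "i \<in> Dec z"
    show "i \<in> Z z"
    proof (rule ccontr)
      assume ni: "i \<notin> Z z"
      have "i < n" using i by (simp add: Dec_def)
      then obtain S where S: "S \<in> set Ss" "i \<in> S" "S \<inter> Z z = {}"
        using dj[of i "Z z"] ni cz by (auto simp: Z_def)
      have "AND_S S z"
        unfolding AND_S_def
      proof
        fix j assume "j \<in> S"
        then have "j < n" "j \<notin> Z z" using sub S by auto
        then show "z ! j" by (simp add: Z_def)
      qed
      then show False using i S by (simp add: Dec_def)
    qed
  qed
  have finD: "finite (Dec z)" for z by (simp add: Dec_def)
  have cx: "count_list x True + card (Z x) = n" using count_plus_zeros[OF x] by (simp add: Z_def)
  have cy: "count_list y True + card (Z y) = n" using count_plus_zeros[OF y] by (simp add: Z_def)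
  have small: "Z x = Z y" if "card (Z x) \<le> d" and DD': "Dec x = Dec y"
    for x y
  proof -
    have "Dec x = Z x" using DZ[OF that(1)] ZD by auto
    have "card (Z y) \<le> card (Dec y)" using ZD finD by (simp add: card_mono)
    also have "\<dots> = card (Z x)" using \<open>Dec x = Z x\<close> DD' by simp
    finally have "card (Z y) \<le> d" using that(1) by simp
    then have "Dec y = Z y" using DZ ZD by auto
    then show ?thesis using \<open>Dec x = Z x\<close> DD' by simp
  qed
  show ?thesis
  proof (cases "card (Z x) \<le> d \<or> card (Z y) \<le> d")
    case True
    then have "Z x = Z y" using small DD by metis
    then have "count_list x True = count_list y True" using cx cy by simp
    then show ?thesis using hf x y by simp
  next
    case False
    have "count_list x True + d + 1 \<le> n" "count_list y True + d + 1 \<le> n"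
      using False cx cy by linarith+
    then show ?thesis using hf[OF x] hf[OF y] gc by simp
  qed
qed

lemma NAADT_le:
  assumes "\<forall>S\<in>set Ss. S \<subseteq> {..<n}"
    and "\<forall>x y. length x = n \<longrightarrow> length y = n \<longrightarrow>
         map (\<lambda>S. AND_S S x) Ss = map (\<lambda>S. AND_S S y) Ss \<longrightarrow> f x = f y"
  shows "NAADT n f \<le> length Ss"
  unfolding NAADT_def by (rule Least_le) (use assms in blast)

lemma disj_singletons: "disj n d (map (\<lambda>i. {i}) [0..<n])"
  unfolding disj_def by auto

lemma disj_all: "disj n 0 [{..<n}]"
  unfolding disj_def
proof (intro conjI allI impI)
  fix i T assume "i < n" "T \<subseteq> {..<n}" "card T \<le> 0"
  then have "T = {}" using finite_subset by fastforce
  then show "\<exists>S\<in>set [{..<n}]. i \<in> S \<and> S \<inter> T = {}" using \<open>i < n\<close> by auto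
qed auto



lemma ball_card:
  fixes c0 :: "nat \<Rightarrow> nat"
  assumes "A \<le> L"
  shows "card {w \<in> PiE {0..<L} (\<lambda>_. {0..<q}). A \<le> card {a\<in>{0..<L}. w a = c0 a}}
          \<le> (L choose A) * q ^ (L - A)"
proof -
  define PS where "PS = {P. P \<subseteq> {0..<L} \<and> card P = A}"
  define B where "B P = PiE {0..<L} (\<lambda>a. if a \<in> P then {c0 a} else {0..<q})" for P
  have sub: "{w \<in> PiE {0..<L} (\<lambda>_. {0..<q}). A \<le> card {a\<in>{0..<L}. w a = c0 a}} \<subseteq> (\<Union>P\<in>PS. B P)"
  proof
    fix w assume w: "w \<in> {w \<in> PiE {0..<L} (\<lambda>_. {0..<q}). A \<le> card {a\<in>{0..<L}. w a = c0 a}}"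
    then obtain P where P: "P \<subseteq> {a\<in>{0..<L}. w a = c0 a}" "card P = A"
      by (auto elim: obtain_subset_with_card_n)
    have "w \<in> B P" using w P unfolding B_def PiE_iff by auto
    moreover have "P \<in> PS" using P by (auto simp: PS_def)
    ultimately show "w \<in> (\<Union>P\<in>PS. B P)" by auto
  qed
  have finPS: "finite PS" unfolding PS_def by (rule finite_subset[of _ "Pow {0..<L}"]) auto
  have cB: "card (B P) = q ^ (L - A)" if "P \<in> PS" for P
  proof -
    have PL: "P \<subseteq> {0..<L}" "card P = A" using that by (auto simp: PS_def)
    have "card (B P) = (\<Prod>a\<in>{0..<L}. card (if a \<in> P then {c0 a} else {0..<q}))"
      unfolding B_def by (rule card_PiE) simp
    also have "\<dots> = (\<Prod>a\<in>{0..<L}. if a \<in> P then 1 else q)"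
      by (rule prod.cong) auto
    also have "\<dots> = (\<Prod>a\<in>{0..<L} \<inter> {x. x \<in> P}. 1) * (\<Prod>a\<in>{0..<L} \<inter> - {x. x \<in> P}. q)"
      by (rule prod.If_cases) simp
    also have "\<dots> = q ^ card ({0..<L} - P)" by (simp add: Diff_eq)
    also have "card ({0..<L} - P) = L - A" using PL by (simp add: card_Diff_subset finite_subset)
    finally show ?thesis .
  qed
  have "card {w \<in> PiE {0..<L} (\<lambda>_. {0..<q}). A \<le> card {a\<in>{0..<L}. w a = c0 a}} \<le> card (\<Union>P\<in>PS. B P)"
    by (rule card_mono[OF _ sub]) (use finPS in \<open>auto intro!: finite_PiE simp: B_def\<close>)
  also have "\<dots> \<le> (\<Sum>P\<in>PS. card (B P))" by (rule card_UN_le[OF finPS])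
  also have "\<dots> = card PS * q ^ (L - A)" using cB by simp
  also have "card PS = L choose A" unfolding PS_def by (subst n_subsets) auto
  finally show ?thesis .
qed

lemma code_exists:
  assumes nA: "n \<le> 2 ^ A" and A1: "1 \<le> A" and AL: "A \<le> L"
  shows "\<exists>c::nat \<Rightarrow> nat \<Rightarrow> nat. (\<forall>i<n. c i \<in> PiE {0..<L} (\<lambda>_. {0..<2*L})) \<and>
           (\<forall>i<n. \<forall>j<n. i \<noteq> j \<longrightarrow> card {a\<in>{0..<L}. c i a = c j a} < A)"
proof -
  define q where "q = 2 * L"
  define W where "W = PiE {0..<L} (\<lambda>_. {0..<q})"
  define ball where "ball c0 = {w \<in> W. A \<le> card {a\<in>{0..<L}. w a = c0 a}}" for c0 :: "nat \<Rightarrow> nat"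
  have cW: "card W = q ^ L" unfolding W_def by (subst card_PiE) simp_all
  have finW: "finite W" unfolding W_def by (rule finite_PiE) auto
  have cb: "card (ball c0) \<le> (L choose A) * q ^ (L - A)" for c0
    unfolding ball_def W_def by (rule ball_card[OF AL])
  have L1: "L \<ge> 1" using A1 AL by simp
  have "\<forall>m\<le>n. \<exists>c::nat \<Rightarrow> nat \<Rightarrow> nat. (\<forall>i<m. c i \<in> W) \<and>
           (\<forall>i<m. \<forall>j<m. i \<noteq> j \<longrightarrow> card {a\<in>{0..<L}. c i a = c j a} < A)"
  proof (intro allI impI)
    fix m assume "m \<le> n"
    then show "\<exists>c::nat \<Rightarrow> nat \<Rightarrow> nat. (\<forall>i<m. c i \<in> W) \<and>
           (\<forall>i<m. \<forall>j<m. i \<noteq> j \<longrightarrow> card {a\<in>{0..<L}. c i a = c j a} < A)"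
    proof (induction m)
      case 0 then show ?case by simp
    next
      case (Suc m)
      then obtain c :: "nat \<Rightarrow> nat \<Rightarrow> nat" where c: "\<forall>i<m. c i \<in> W"
          "\<forall>i<m. \<forall>j<m. i \<noteq> j \<longrightarrow> card {a\<in>{0..<L}. c i a = c j a} < A" by auto
      define Bad where "Bad = (\<Union>i<m. ball (c i))"
      have "card Bad \<le> (\<Sum>i<m. card (ball (c i)))" unfolding Bad_def by (rule card_UN_le) simp
      also have "\<dots> \<le> m * ((L choose A) * q ^ (L - A))"
        using sum_bounded_above[of "{..<m}" "\<lambda>i. card (ball (c i))" "(L choose A) * q ^ (L - A)"] cb by simp
      also have "\<dots> < q ^ L"
      proof -
        have m: "m < 2 ^ A" using Suc.prems nA by simp
        have pos: "0 < (L choose A) * q ^ (L - A)" using AL L1 by (simp add: q_def)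
        have "m * ((L choose A) * q ^ (L - A)) < 2 ^ A * ((L choose A) * q ^ (L - A))"
          using m pos by simp
        also have "\<dots> \<le> 2 ^ A * (L ^ A * q ^ (L - A))"
          using binomial_le_pow[OF AL] by simp
        also have "\<dots> = (2 * L) ^ A * q ^ (L - A)" by (simp add: power_mult_distrib)
        also have "\<dots> = q ^ (A + (L - A))" by (simp only: q_def power_add)
        also have "\<dots> = q ^ L" using AL by simp
        finally show ?thesis .
      qed
      finally have "card Bad < card W" using cW by simp
      moreover have "finite Bad" unfolding Bad_def ball_def using finW by auto
      ultimately have "\<not> W \<subseteq> Bad" by (meson card_mono not_le)
      then obtain w where w: "w \<in> W" "w \<notin> Bad" by auto
      define c' where "c' = c(m := w)"
      have far: "card {a\<in>{0..<L}. w a = c i a} < A" if "i < m" for i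
        using w that unfolding Bad_def ball_def by (auto simp: not_le)
      show ?case
      proof (intro exI conjI allI impI)
        fix i assume "i < Suc m" then show "c' i \<in> W" using c w by (auto simp: c'_def less_Suc_eq)
      next
        fix i j assume ij: "i < Suc m" "j < Suc m" "i \<noteq> j"
        show "card {a\<in>{0..<L}. c' i a = c' j a} < A"
        proof (cases "i = m")
          case True
          then have "j < m" using ij by simp
          then show ?thesis using far[of j] True ij by (simp add: c'_def)
        next
          case False
          show ?thesis
          proof (cases "j = m")
            case True
            then have "i < m" using ij False by simp
            moreover have "{a\<in>{0..<L}. c i a = w a} = {a\<in>{0..<L}. w a = c i a}" by auto
            ultimately show ?thesis using far[of i] True False by (simp add: c'_def)
          next
            case False2: False
            then show ?thesis using c ij False by (simp add: c'_def)
          qed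
        qed
      qed
    qed
  qed
  then show ?thesis unfolding W_def q_def by blast
qed


lemma disj_code:
  fixes c :: "nat \<Rightarrow> nat \<Rightarrow> nat"
  assumes cW: "\<forall>i<n. c i \<in> PiE {0..<L} (\<lambda>_. {0..<q})"
    and far: "\<forall>i<n. \<forall>j<n. i \<noteq> j \<longrightarrow> card {a\<in>{0..<L}. c i a = c j a} < A"
    and L: "L = d * A" and A1: "1 \<le> A" and d1: "1 \<le> d"
  shows "disj n d (map (\<lambda>p. {j. j < n \<and> c j (fst p) = snd p}) (List.product [0..<L] [0..<q]))"
  unfolding disj_def
proof (intro conjI allI impI)
  fix i T assume i: "i < n" and T: "T \<subseteq> {..<n}" "i \<notin> T" "card T \<le> d"
  define Bd where "Bd = (\<Union>j\<in>T. {a\<in>{0..<L}. c i a = c j a})"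
  have finT: "finite T" using T finite_subset by blast
  have "card Bd \<le> (\<Sum>j\<in>T. card {a\<in>{0..<L}. c i a = c j a})" unfolding Bd_def by (rule card_UN_le[OF finT])
  also have "\<dots> \<le> card T * (A - 1)"
    using sum_bounded_above[of T "\<lambda>j. card {a\<in>{0..<L}. c i a = c j a}" "A - 1"] far i T
    by (force simp: less_Suc_eq_le)
  also have "\<dots> \<le> d * (A - 1)" using T by simp
  also have "\<dots> < L" using L A1 d1 by (cases d) (auto simp: algebra_simps)
  finally have "card Bd < L" .
  moreover have finBd: "finite Bd" unfolding Bd_def using finT by (simp add: finT)
  ultimately have nsub: "\<not> {0..<L} \<subseteq> Bd"
  proof (intro notI)
    assume "card Bd < L" "finite Bd" "{0..<L} \<subseteq> Bd"
    then have "card {0..<L} \<le> card Bd" by (intro card_mono) 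
    then show False using \<open>card Bd < L\<close> by simp
  qed
  then obtain a where "a \<in> {0..<L}" "a \<notin> Bd" by blast
  then have a: "a < L" "a \<notin> Bd" by auto
  have ci: "c i \<in> PiE {0..<L} (\<lambda>_. {0..<q})" using cW i by blast
  have "c i a \<in> {0..<q}" by (rule PiE_mem[OF ci]) (use a(1) in simp)
  then have ciq: "c i a < q" by simp
  let ?S = "{j. j < n \<and> c j a = c i a}"
  have mem: "?S \<in> set (map (\<lambda>p. {j. j < n \<and> c j (fst p) = snd p}) (List.product [0..<L] [0..<q]))"
  proof -
    have "(a, c i a) \<in> set (List.product [0..<L] [0..<q])" using a ciq by (simp only: set_product set_upt mem_Times_iff fst_conv snd_conv atLeastLessThan_iff) simp
    moreover have "?S = (\<lambda>p. {j. j < n \<and> c j (fst p) = snd p}) (a, c i a)" by simp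
    ultimately show ?thesis unfolding set_map by (intro image_eqI[where x="(a, c i a)"]) simp_all
  qed
  have iS: "i \<in> ?S" using i by simp
  have dS: "?S \<inter> T = {}"
  proof (rule ccontr)
    assume "?S \<inter> T \<noteq> {}"
    then obtain j where j: "j \<in> T" "c j a = c i a" by blast
    then have "a \<in> Bd" unfolding Bd_def using a(1) by (intro UN_I[of j]) auto
    then show False using a(2) by simp
  qed
  show "\<exists>S\<in>set (map (\<lambda>p. {j. j < n \<and> c j (fst p) = snd p}) (List.product [0..<L] [0..<q])). i \<in> S \<and> S \<inter> T = {}"
    by (intro bexI[where x="?S"]) (rule conjI[OF iS dS], rule mem)
qed (simp only: set_map ball_simps, blast)



lemma map2_and_True: "length x = n \<Longrightarrow> map2 (\<and>) x (replicate n True) = x"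
  by (induction x arbitrary: n) (auto simp: Suc_length_conv)

lemma final_arith:
  fixes n d D A N :: nat
  assumes D1: "1 \<le> D" and d1: "1 \<le> d" and dn: "d * d < n"
    and bin: "n choose d \<le> 2 ^ D"
    and A1: "1 \<le> A" and Amin: "2 \<le> A \<Longrightarrow> 2 ^ (A - 1) < n"
  shows "d * A \<le> 4 * D"
proof -
  have n2: "n \<ge> 2" using dn d1 by (metis le_square less_le_trans nat_less_le not_less_eq_eq one_add_one plus_1_eq_Suc)
  have dlen: "d \<le> n" using dn d1 by (metis le_square less_imp_le_nat order.trans)
  have "(real n / real d) ^ d \<le> real (n choose d)" by (rule binomial_ge_n_over_k_pow_k[OF dlen])
  also have "\<dots> \<le> 2 ^ D" using bin by (metis of_nat_le_iff of_nat_numeral of_nat_power)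
  finally have b1: "(real n / real d) ^ d \<le> 2 ^ D" .
  have "real d * real d < real n" using dn by (metis of_nat_less_iff of_nat_mult)
  then have "real d * real d * real n \<le> real n * real n" by (intro mult_right_mono) auto
  then have sq: "real n \<le> (real n / real d) ^ 2" using d1
    by (simp add: power2_eq_square field_simps mult.assoc)
  have key: "real n ^ d \<le> 2 ^ (2 * D)"
  proof -
    have "real n ^ d \<le> ((real n / real d) ^ 2) ^ d" by (rule power_mono[OF sq]) simp
    also have "\<dots> = ((real n / real d) ^ d) ^ 2" by (simp add: power_mult[symmetric] mult.commute)
    also have "\<dots> \<le> (2 ^ D) ^ 2" by (rule power_mono[OF b1]) simp
    also have "\<dots> = 2 ^ (2 * D)" by (simp add: power_mult[symmetric] mult.commute)
    finally show ?thesis .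
  qed
  have dD: "d \<le> 2 * D"
  proof -
    have "(2::real) ^ d \<le> real n ^ d" by (rule power_mono) (use n2 in auto)
    then have "(2::real) ^ d \<le> 2 ^ (2 * D)" using key by linarith
    then show ?thesis by (rule power_le_imp_le_exp[rotated]) simp
  qed
  show ?thesis
  proof (cases "A \<ge> 2")
    case True
    have "(2::real) ^ ((A - 1) * d) = (2 ^ (A - 1)) ^ d" by (simp add: power_mult)
    also have "\<dots> < real n ^ d"
      using Amin[OF True] d1 by (intro power_strict_mono) (auto simp: of_nat_less_iff[symmetric])
    also have "\<dots> \<le> 2 ^ (2 * D)" by (rule key)
    finally have "(A - 1) * d < 2 * D" using power_less_imp_less_exp[of "2::real"] by simp
    then have "d * A = d * (A - 1) + d" using True by (cases A) auto
    then show ?thesis using \<open>(A - 1) * d < 2 * D\<close> dD by (simp add: mult.commute)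
  next
    case False
    then have "A = 1" using A1 by simp
    then show ?thesis using dD by simp
  qed
qed



lemma main_bound:
  assumes sym: "symmetric_fn n f"
  shows "real (NAADT n f) \<le> 32 * (real (Dcc_AND n f))^2"
proof -
  define D where "D = Dcc_AND n f"
  define g where "g w = f (replicate w True @ replicate (n - w) False)" for w
  have hf: "f x = g (count_list x True)" if x: "length x = n" for x
  proof -
    have c: "count_list x True \<le> n" using count_le_length[of x True] x by simp
    define z where "z = replicate (count_list x True) True @ replicate (n - count_list x True) False"
    have cr: "count_list (replicate m True) True = m" for m by (induction m) auto
    have lz: "length z = n" using c by (simp add: z_def)
    have cz: "count_list z True = count_list x True" by (simp add: z_def cr)
    have "f x = f z" using sym x lz cz unfolding symmetric_fn_def by metis
    then show ?thesis by (simp add: g_def z_def)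
  qed
  show ?thesis
  proof (cases "\<forall>w<n. g w = g (Suc w)")
    case True
    have gc: "w \<le> n \<Longrightarrow> g w = g 0" for w
      by (induction w) (use True in auto)
    have H: "\<forall>x y. length x = n \<longrightarrow> length y = n \<longrightarrow>
         map (\<lambda>S. AND_S S x) [] = map (\<lambda>S. AND_S S y) [] \<longrightarrow> f x = f y"
    proof (intro allI impI)
      fix x y :: "bool list" assume x: "length x = n" and y: "length y = n"
      have "f x = g 0" using hf[OF x] gc[of "count_list x True"] count_le_length[of x True] x by simp
      moreover have "f y = g 0" using hf[OF y] gc[of "count_list y True"] count_le_length[of y True] y by simp
      ultimately show "f x = f y" by simp
    qed
    have "NAADT n f \<le> length ([] :: nat set list)" by (rule NAADT_le[OF _ H]) simp
    then show ?thesis by simp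
  next
    case False
    then have ex: "\<exists>w. w < n \<and> g w \<noteq> g (Suc w)" by auto
    define w0 where "w0 = (LEAST w. w < n \<and> g w \<noteq> g (Suc w))"
    have w0: "w0 < n" "g w0 \<noteq> g (Suc w0)" using LeastI_ex[OF ex] unfolding w0_def by auto
    have below: "w < w0 \<Longrightarrow> g w = g (Suc w)" for w
      using not_less_Least[of w "\<lambda>w. w < n \<and> g w \<noteq> g (Suc w)"] w0 unfolding w0_def by auto
    have gconst: "w \<le> w0 \<Longrightarrow> g w = g 0" for w
      by (induction w) (use below in auto)
    define d where "d = n - w0 - 1"
    define t where "t = n - w0"
    have td: "t = d + 1" using w0 by (simp add: t_def d_def)
    obtain P where P: "protocol_depth P = D"
      "\<forall>x y. length x = n \<longrightarrow> length y = n \<longrightarrow> run_protocol P x y = compose_AND f x y"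
      using Dcc_AND_witness[of n f] unfolding D_def by auto
    define r where "r = length (rects P)"
    have r: "r \<le> 2 ^ D" using rects_len[of P] P(1) by (simp add: r_def)
    define G where "G w = (if g w then 1 else 0 :: real)" for w
    define \<alpha> where "\<alpha> l x = fst (rects P ! l) x" for l x
    define \<beta> where "\<beta> l y = snd (rects P ! l) y" for l y
    have dec: "G (count_list (map2 (\<and>) x y) True) = (\<Sum>l<r. \<alpha> l x * \<beta> l y)"
      if "length x = n" "length y = n" for x y
    proof -
      have "run_protocol P x y = g (count_list (map2 (\<and>) x y) True)"
        using P(2) that hf[of "map2 (\<and>) x y"] by (simp add: compose_AND_def)
      then show ?thesis
        using rects_run[of P x y] sum_list_map_nth[of "\<lambda>p. fst p x * snd p y" "rects P"]
        by (simp add: G_def r_def \<alpha>_def \<beta>_def)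
    qed
    have gw: "g w = f (replicate w True @ replicate (n - w) False)" for w by (simp add: g_def)
    have D1: "1 \<le> D"
    proof (rule ccontr)
      assume "\<not> 1 \<le> D"
      then have "protocol_depth P = 0" using P(1) by simp
      then obtain v where v: "P = Leaf v" by (cases P) auto
      have fv: "f x = v" if "length x = n" for x
      proof -
        have "run_protocol P x (replicate n True) = compose_AND f x (replicate n True)"
          using P(2) that by simp
        then show ?thesis using map2_and_True[OF that] by (simp add: v compose_AND_def)
      qed
      have "g w0 = v" unfolding gw by (rule fv) (use w0(1) in simp)
      moreover have "g (Suc w0) = v" unfolding gw by (rule fv) (use w0(1) in simp)
      ultimately show False using w0(2) by simp
    qed
    have LB1: "n choose d \<le> 2 ^ D"
    proof -
      have "fdiff (Suc w0) G 0 = G (0 + Suc w0) - G 0"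
      proof (rule fdiff_const_step)
        fix j assume "0 \<le> j" "j < 0 + Suc w0"
        then have "g j = g 0" using gconst[of j] by simp
        then show "G j = G 0" by (simp add: G_def)
      qed simp
      moreover have "g w0 = g 0" using gconst[of w0] by simp
      ultimately have nz: "fdiff (Suc w0) G 0 \<noteq> 0" using w0(2) by (auto simp: G_def)
      have "(n - 0) choose (Suc w0) \<le> r"
        using window[OF dec _ nz] w0(1) by simp
      moreover have "n choose (Suc w0) = n choose d"
        using w0 by (subst binomial_symmetric) (auto simp: d_def)
      ultimately show ?thesis using r by simp
    qed
    have LB2: "t \<le> 4 * D"
    proof (cases "t < 4")
      case True then show ?thesis using D1 by simp
    next
      case False
      define K where "K = t div 4 + 1"
      define L where "L = 2 * (t div 4)"
      have "\<exists>k. K \<le> k \<and> k \<le> L \<and> fdiff k G w0 \<noteq> 0"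
      proof (rule poly_window)
        show "G (w0 + j) = 0 \<or> G (w0 + j) = 1" for j by (simp add: G_def)
        show "G w0 \<noteq> G (Suc w0)" using w0(2) by (simp add: G_def)
        show "1 \<le> L" using False by (simp add: L_def)
        show "2 * K \<le> L + 2" by (simp add: K_def L_def)
      qed
      then obtain k where k: "K \<le> k" "k \<le> L" "fdiff k G w0 \<noteq> 0" by blast
      have kt: "2 * k \<le> t" using k(2) by (simp add: L_def)
      have k1: "1 \<le> k" using k(1) by (simp add: K_def)
      have "(n - w0) choose k \<le> r"
      proof (rule window[OF dec _ k(3)])
        show "w0 + k \<le> n" using kt w0(1) unfolding t_def by arith
      qed
      then have ctk: "t choose k \<le> 2 ^ D" using r by (simp add: t_def)
      have "(2::real) ^ k \<le> (real t / real k) ^ k"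
        using kt k1 by (intro power_mono) (auto simp: field_simps)
      also have "\<dots> \<le> real (t choose k)" by (rule binomial_ge_n_over_k_pow_k) (use kt in simp)
      also have "\<dots> \<le> 2 ^ D" using ctk by (metis of_nat_le_iff of_nat_numeral of_nat_power)
      finally have "k \<le> D" by (rule power_le_imp_le_exp[rotated]) simp
      then show ?thesis using k(1) by (simp add: K_def)
    qed
    have gc': "w + d + 1 \<le> n \<Longrightarrow> g w = g 0" for w using gconst[of w] w0(1) by (simp add: d_def)
    have upper: "NAADT n f \<le> length Ss" if "disj n d Ss" for Ss
    proof (rule NAADT_le)
      show "\<forall>S\<in>set Ss. S \<subseteq> {..<n}" using that by (simp add: disj_def)
      show "\<forall>x y. length x = n \<longrightarrow> length y = n \<longrightarrow>
         map (\<lambda>S. AND_S S x) Ss = map (\<lambda>S. AND_S S y) Ss \<longrightarrow> f x = f y"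
        by (intro allI impI) (rule disj_determines[where n=n and f=f and g=g and d=d and c="g 0" and Ss=Ss, OF hf gc' that], assumption+)
    qed
    have Un: "NAADT n f \<le> n" using upper[OF disj_singletons] by simp
    show ?thesis
    proof (cases "d = 0")
      case True
      have "NAADT n f \<le> 1" using upper[of "[{..<n}]"] disj_all True by simp
      moreover have "(1::real) \<le> 32 * real D ^ 2"
      proof -
        have "(1::real) \<le> real D" using D1 by simp
        then have "(1::real) \<le> real D ^ 2" by (rule one_le_power)
        then show ?thesis by linarith
      qed
      ultimately show ?thesis unfolding D_def[symmetric] by linarith
    next
      case False
      then have d1: "1 \<le> d" by simp
      show ?thesis
      proof (cases "n \<le> d * d")
        case True
        have "d < 4 * D" using LB2 td by simp
        then have "d * d \<le> (4 * D) * (4 * D)" by (intro mult_le_mono) simp_all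
        then have "NAADT n f \<le> 16 * D^2" using Un True by (simp add: power2_eq_square)
        then have "real (NAADT n f) \<le> real (16 * D^2)" by (simp only: of_nat_le_iff)
        then have "real (NAADT n f) \<le> 16 * (real D)^2" by simp
        then show ?thesis unfolding D_def[symmetric] using zero_le_power2[of "real D"] by linarith
      next
        case False
        then have dn: "d * d < n" by simp
        have exA: "\<exists>A. 1 \<le> A \<and> n \<le> 2 ^ A"
          by (rule exI[of _ n]) (use w0 in \<open>auto intro: less_imp_le_nat[OF less_exp]\<close>)
        define A where "A = (LEAST A. 1 \<le> A \<and> n \<le> 2 ^ A)"
        have A: "1 \<le> A" "n \<le> 2 ^ A" using LeastI_ex[OF exA] unfolding A_def by auto
        have Amin: "2 ^ (A - 1) < n" if "2 \<le> A"
        proof -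
          have "\<not> (1 \<le> A - 1 \<and> n \<le> 2 ^ (A - 1))"
            using not_less_Least[of "A - 1" "\<lambda>A. 1 \<le> A \<and> n \<le> 2 ^ A"] that unfolding A_def[symmetric] by auto
          then show ?thesis using that by auto
        qed
        define Lc where "Lc = d * A"
        have ALc: "A \<le> Lc" using d1 by (simp add: Lc_def)
        obtain c :: "nat \<Rightarrow> nat \<Rightarrow> nat" where c: "\<forall>i<n. c i \<in> PiE {0..<Lc} (\<lambda>_. {0..<2*Lc})"
          "\<forall>i<n. \<forall>j<n. i \<noteq> j \<longrightarrow> card {a\<in>{0..<Lc}. c i a = c j a} < A"
          using code_exists[OF A(2) A(1) ALc] by blast
        have "NAADT n f \<le> length (map (\<lambda>p. {j. j < n \<and> c j (fst p) = snd p}) (List.product [0..<Lc] [0..<2*Lc]))"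
          by (rule upper[OF disj_code[OF c(1) c(2) _ A(1) d1]]) (simp add: Lc_def)
        then have N: "NAADT n f \<le> 2 * (d * A) * (d * A)" by (simp add: Lc_def)
        have dA: "d * A \<le> 4 * D" by (rule final_arith[OF D1 d1 dn LB1 A(1) Amin])
        have "(d * A) * (d * A) \<le> (4 * D) * (4 * D)" by (rule mult_le_mono[OF dA dA])
        then have "NAADT n f \<le> 32 * D^2" using N by (simp add: power2_eq_square)
        then have "real (NAADT n f) \<le> real (32 * D^2)" by (simp only: of_nat_le_iff)
        then show ?thesis unfolding D_def[symmetric] by simp
      qed
    qed
  qed
qed


theorem theorem1p5:
  shows "\<exists>C::real. C > 0 \<and> (\<forall>n (f :: bool list \<Rightarrow> bool). symmetric_fn n f \<longrightarrow>
           real (NAADT n f) \<le> C * (real (Dcc_AND n f))^2)"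
  by (rule exI[of _ 32]) (auto intro: main_bound)

end
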